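(* Let $\mathcal{X}$ be a set, let $k$ be a strong kernel on $\mathcal{X}$, and let $n\in\mathbb{N}$. Then the optimal assignment kernel $K^k_{\mathfrak{B}}$ on the set $[\mathcal{X}]^n$ of all $n$-element subsets of $\mathcal{X}$ is a valid kernel, i.e. it is symmetric and for every finite collection $X_1,\dots,X_m\in[\mathcal{X}]^n$ the matrix $\big(K^k_{\mathfrak{B}}(X_i,X_j)\big)_{i,j=1}^m$ is positive semidefinite.
   Context: A strong kernel on a set $\mathcal{X}$ is a symmetric function $k:\mathcal{X}\times\mathcal{X}\to\mathbb{R}_{\ge 0}$ such that $k(x,y)\ge\min\{k(x,z),k(z,y)\}$ for all $x,y,z\in\mathcal{X}$. For $X,Y\in[\mathcal{X}]^n$, $\mathfrak{B}(X,Y)$ is the set of all bijections between $X$ and $Y$ (viewed as sets of pairs $(x,y)$), and the optimal assignment kernel is $K^k_{\mathfrak{B}}(X,Y)=\max_{B\in\mathfrak{B}(X,Y)}\sum_{(x,y)\in B}k(x,y)$. *)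

theory Defs
  imports Complex_Main
begin

definition strong_kernel :: "'a set \<Rightarrow> ('a \<Rightarrow> 'a \<Rightarrow> real) \<Rightarrow> bool" where
  "strong_kernel S k \<longleftrightarrow>
     (\<forall>x\<in>S. \<forall>y\<in>S. k x y = k y x \<and> k x y \<ge> 0) \<and>
     (\<forall>x\<in>S. \<forall>y\<in>S. \<forall>z\<in>S. k x y \<ge> min (k x z) (k z y))"

definition nsubsets :: "'a set \<Rightarrow> nat \<Rightarrow> 'a set set" where
  "nsubsets S n = {X. X \<subseteq> S \<and> finite X \<and> card X = n}"

definition bijections :: "'a set \<Rightarrow> 'a set \<Rightarrow> ('a \<times> 'a) set set" where
  "bijections X Y = {B. B \<subseteq> X \<times> Y \<and> (\<forall>x\<in>X. \<exists>!y. (x, y) \<in> B) \<and> (\<forall>y\<in>Y. \<exists>!x. (x, y) \<in> B)}"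

definition oa_kernel :: "('a \<Rightarrow> 'a \<Rightarrow> real) \<Rightarrow> 'a set \<Rightarrow> 'a set \<Rightarrow> real" where
  "oa_kernel k X Y = Max ((\<lambda>B. \<Sum>(x, y)\<in>B. k x y) ` bijections X Y)"

definition psd_matrix :: "nat \<Rightarrow> (nat \<Rightarrow> nat \<Rightarrow> real) \<Rightarrow> bool" where
  "psd_matrix m M \<longleftrightarrow> (\<forall>c :: nat \<Rightarrow> real. (\<Sum>i<m. \<Sum>j<m. c i * M i j * c j) \<ge> 0)"

end

theory Submission
  imports Defs
begin

definition cl :: "'a set \<Rightarrow> ('a\<Rightarrow>'a\<Rightarrow>real) \<Rightarrow> real \<Rightarrow> 'a \<Rightarrow> 'a set" where
  "cl S k t z = {w\<in>S. t \<le> k w z}"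
definition cls :: "'a set \<Rightarrow> ('a\<Rightarrow>'a\<Rightarrow>real) \<Rightarrow> real \<Rightarrow> 'a set \<Rightarrow> 'a set set" where
  "cls S k t A = cl S k t ` {z\<in>A. t \<le> k z z}"
definition HH :: "'a set \<Rightarrow> ('a\<Rightarrow>'a\<Rightarrow>real) \<Rightarrow> real \<Rightarrow> 'a set \<Rightarrow> 'a set \<Rightarrow> 'a set \<Rightarrow> real" where
  "HH S k t A X Y = (\<Sum>C\<in>cls S k t A. real (min (card (X\<inter>C)) (card (Y\<inter>C))))"
definition vals :: "('a\<Rightarrow>'a\<Rightarrow>real) \<Rightarrow> 'a set \<Rightarrow> real set" where
  "vals k A = {k x y | x y. x\<in>A \<and> y\<in>A \<and> 0 < k x y}"
definition dv :: "('a\<Rightarrow>'a\<Rightarrow>real) \<Rightarrow> 'a set \<Rightarrow> real \<Rightarrow> real" where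
  "dv k A v = v - Max (insert 0 {u\<in>vals k A. u<v})"
definition GG :: "'a set \<Rightarrow> ('a\<Rightarrow>'a\<Rightarrow>real) \<Rightarrow> 'a set \<Rightarrow> 'a set \<Rightarrow> 'a set \<Rightarrow> real" where
  "GG S k A X Y = (\<Sum>v\<in>vals k A. dv k A v * HH S k v A X Y)"

lemma finite_vals: "finite A \<Longrightarrow> finite (vals k A)"
proof -
  assume "finite A"
  have "vals k A \<subseteq> (\<lambda>(x,y). k x y) ` (A \<times> A)" unfolding vals_def by auto
  thus ?thesis using \<open>finite A\<close> finite_subset by blast
qed

lemma dv_nonneg: "finite A \<Longrightarrow> v \<in> vals k A \<Longrightarrow> 0 \<le> dv k A v"
proof -
  assume a: "finite A" "v \<in> vals k A"
  have f: "finite (insert 0 {u\<in>vals k A. u<v})" using finite_vals[OF a(1)] by auto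
  have "v > 0" using a(2) unfolding vals_def by auto
  hence "\<forall>u\<in>insert 0 {u\<in>vals k A. u<v}. u \<le> v" by auto
  hence "Max (insert 0 {u\<in>vals k A. u<v}) \<le> v" using f by (subst Max_le_iff) auto
  thus ?thesis unfolding dv_def by simp
qed

lemma decomp:
  assumes fA: "finite A"
  shows "a \<in> insert 0 (vals k A) \<Longrightarrow> a = (\<Sum>v\<in>{v\<in>vals k A. v \<le> a}. dv k A v)"
proof (induction "card {v\<in>vals k A. v \<le> a}" arbitrary: a rule: less_induct)
  case less
  have fV: "finite (vals k A)" using finite_vals[OF fA] .
  have pos: "\<And>v. v \<in> vals k A \<Longrightarrow> 0 < v" unfolding vals_def by auto
  show ?case
  proof (cases "a = 0")
    case True
    hence "{v\<in>vals k A. v \<le> a} = {}" using pos by force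
    thus ?thesis using True by (metis sum.empty)
  next
    case False
    hence aV: "a \<in> vals k A" using less.prems by auto
    define P where "P = insert 0 {u\<in>vals k A. u<a}"
    define p where "p = Max P"
    have fP: "finite P" unfolding P_def using fV by auto
    have pP: "p \<in> P" unfolding p_def using fP P_def Max_in by blast
    hence pa: "p < a" "p \<in> insert 0 (vals k A)" unfolding P_def using pos aV by auto
    have maxp: "\<And>u. u \<in> vals k A \<Longrightarrow> u < a \<Longrightarrow> u \<le> p" unfolding p_def using fP P_def by auto
    have eq: "{v\<in>vals k A. v \<le> a} = insert a {v\<in>vals k A. v \<le> p}"
      using aV pa maxp by force
    have anot: "a \<notin> {v\<in>vals k A. v \<le> p}" using pa by auto
    have sub: "{v\<in>vals k A. v \<le> p} \<subset> {v\<in>vals k A. v \<le> a}" using eq anot by auto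
    have "card {v\<in>vals k A. v \<le> p} < card {v\<in>vals k A. v \<le> a}"
      using sub fV by (intro psubset_card_mono) auto
    hence ih: "p = (\<Sum>v\<in>{v\<in>vals k A. v \<le> p}. dv k A v)" using less.hyps pa(2) by blast
    have "(\<Sum>v\<in>{v\<in>vals k A. v \<le> a}. dv k A v) = dv k A a + p"
      unfolding eq using anot fV ih by (subst sum.insert) auto
    also have "\<dots> = a" unfolding dv_def p_def P_def by simp
    finally show ?thesis by simp
  qed
qed


context
  fixes S :: "'a set" and k :: "'a \<Rightarrow> 'a \<Rightarrow> real"
  assumes sk: "strong_kernel S k"
begin

lemma ksym: "x\<in>S \<Longrightarrow> y\<in>S \<Longrightarrow> k x y = k y x"
  using sk unfolding strong_kernel_def by blast
lemma knn: "x\<in>S \<Longrightarrow> y\<in>S \<Longrightarrow> 0 \<le> k x y"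
  using sk unfolding strong_kernel_def by blast
lemma ktr: "x\<in>S \<Longrightarrow> y\<in>S \<Longrightarrow> z\<in>S \<Longrightarrow> t \<le> k x z \<Longrightarrow> t \<le> k z y \<Longrightarrow> t \<le> k x y"
proof -
  assume a: "x\<in>S" "y\<in>S" "z\<in>S" "t \<le> k x z" "t \<le> k z y"
  have "min (k x z) (k z y) \<le> k x y" using sk a(1-3) unfolding strong_kernel_def by blast
  thus ?thesis using a(4,5) by linarith
qed
lemma kdiag: "x\<in>S \<Longrightarrow> y\<in>S \<Longrightarrow> k x y \<le> k x x"
  using ktr[of x x y "k x y"] ksym[of x y] by simp

lemma cl_eq: "w\<in>S \<Longrightarrow> z\<in>S \<Longrightarrow> t \<le> k w z \<Longrightarrow> cl S k t w = cl S k t z"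
proof -
  assume a: "w\<in>S" "z\<in>S" "t \<le> k w z"
  have "t \<le> k z w" using a ksym by simp
  have "\<And>v. v \<in> S \<Longrightarrow> t \<le> k v w \<longleftrightarrow> t \<le> k v z"
    using ktr[of _ z w t] ktr[of _ w z t] a \<open>t \<le> k z w\<close> by blast
  thus ?thesis unfolding cl_def by auto
qed

lemma upper:
  assumes fA: "finite A" and AS: "A \<subseteq> S" and XA: "X \<subseteq> A" and YA: "Y \<subseteq> A"
    and B: "B \<in> bijections X Y" and t: "0 < t"
  shows "real (card {p\<in>B. t \<le> case_prod k p}) \<le> HH S k t A X Y"
proof -
  let ?P = "{p\<in>B. t \<le> case_prod k p}"
  have fX: "finite X" "finite Y" using fA XA YA finite_subset by auto
  have BXY: "B \<subseteq> X \<times> Y" using B unfolding bijections_def by auto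
  have fB: "finite B" using BXY fX finite_subset by blast
  have fcls: "finite (cls S k t A)" unfolding cls_def using fA by auto
  have sub: "?P \<subseteq> (\<Union>C\<in>cls S k t A. {p\<in>B. fst p \<in> C \<and> snd p \<in> C})"
  proof
    fix p assume pP: "p \<in> ?P"
    obtain x y where p: "p = (x,y)" by force
    have xy: "x \<in> A" "y \<in> A" "x \<in> S" "y \<in> S" using pP p BXY XA YA AS by auto
    have kt: "t \<le> k x y" using pP p by auto
    have "t \<le> k x x" using kt kdiag[OF xy(3,4)] by linarith
    hence "cl S k t x \<in> cls S k t A" unfolding cls_def using xy by auto
    moreover have "x \<in> cl S k t x" "y \<in> cl S k t x"
      unfolding cl_def using \<open>t \<le> k x x\<close> kt xy ksym[of x y] by auto
    ultimately show "p \<in> (\<Union>C\<in>cls S k t A. {p\<in>B. fst p \<in> C \<and> snd p \<in> C})"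
      using pP p by auto
  qed
  have "card ?P \<le> card (\<Union>C\<in>cls S k t A. {p\<in>B. fst p \<in> C \<and> snd p \<in> C})"
    using sub fB fcls by (intro card_mono) auto
  also have "\<dots> \<le> (\<Sum>C\<in>cls S k t A. card {p\<in>B. fst p \<in> C \<and> snd p \<in> C})"
    using fcls by (rule card_UN_le)
  also have "\<dots> \<le> (\<Sum>C\<in>cls S k t A. min (card (X\<inter>C)) (card (Y\<inter>C)))"
  proof (rule sum_mono)
    fix C assume "C \<in> cls S k t A"
    let ?Q = "{p\<in>B. fst p \<in> C \<and> snd p \<in> C}"
    have i1: "inj_on fst ?Q"
    proof (rule inj_onI)
      fix p q assume "p \<in> ?Q" "q \<in> ?Q" "fst p = fst q"
      moreover obtain x y x' y' where "p = (x,y)" "q = (x',y')" by force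
      ultimately have "x = x'" "(x,y) \<in> B" "(x,y') \<in> B" "x \<in> X" using BXY by auto
      moreover have "\<forall>x\<in>X. \<exists>!y. (x, y) \<in> B" using B unfolding bijections_def by blast
      ultimately show "p = q" using \<open>p = (x,y)\<close> \<open>q = (x',y')\<close> by blast
    qed
    have i2: "inj_on snd ?Q"
    proof (rule inj_onI)
      fix p q assume "p \<in> ?Q" "q \<in> ?Q" "snd p = snd q"
      moreover obtain x y x' y' where "p = (x,y)" "q = (x',y')" by force
      ultimately have "y = y'" "(x,y) \<in> B" "(x',y) \<in> B" "y \<in> Y" using BXY by auto
      moreover have "\<forall>y\<in>Y. \<exists>!x. (x, y) \<in> B" using B unfolding bijections_def by blast
      ultimately show "p = q" using \<open>p = (x,y)\<close> \<open>q = (x',y')\<close> by blast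
    qed
    have "card ?Q \<le> card (X\<inter>C)"
      using i1 BXY fX by (intro card_inj_on_le[of fst]) auto
    moreover have "card ?Q \<le> card (Y\<inter>C)"
      using i2 BXY fX by (intro card_inj_on_le[of snd]) auto
    ultimately show "card ?Q \<le> min (card (X\<inter>C)) (card (Y\<inter>C))" by simp
  qed
  finally have "card ?P \<le> (\<Sum>C\<in>cls S k t A. min (card (X\<inter>C)) (card (Y\<inter>C)))" .
  hence "real (card ?P) \<le> real (\<Sum>C\<in>cls S k t A. min (card (X\<inter>C)) (card (Y\<inter>C)))"
    by linarith
  thus ?thesis unfolding HH_def by (simp add: of_nat_sum)
qed


lemma HH_step:
  assumes fA: "finite A" and AS: "A \<subseteq> S" and XA: "X \<subseteq> A" and YA: "Y \<subseteq> A"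
    and x: "x \<in> X" and y: "y \<in> Y" and mx: "\<forall>x'\<in>X. \<forall>y'\<in>Y. k x' y' \<le> k x y"
    and t: "0 < t"
  shows "HH S k t A X Y = (if t \<le> k x y then 1 else 0) + HH S k t A (X-{x}) (Y-{y})"
proof -
  have fX: "finite X" "finite Y" using fA XA YA finite_subset by auto
  have fcls: "finite (cls S k t A)" unfolding cls_def using fA by auto
  have xS: "x \<in> S" "y \<in> S" "x \<in> A" using x y XA YA AS by auto
  show ?thesis
  proof (cases "t \<le> k x y")
    case True
    define C0 where "C0 = cl S k t x"
    have txx: "t \<le> k x x" using True kdiag[OF xS(1,2)] by linarith
    have C0in: "C0 \<in> cls S k t A" unfolding C0_def cls_def using xS txx by auto
    have xC0: "x \<in> C0" "y \<in> C0" unfolding C0_def cl_def using xS txx True ksym[of x y] by auto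
    have other: "x \<notin> C \<and> y \<notin> C" if Cc: "C \<in> cls S k t A" and CC0: "C \<noteq> C0" for C
    proof -
      obtain z where z: "z \<in> A" "C = cl S k t z" using Cc unfolding cls_def by blast
      have zS: "z \<in> S" using z AS by auto
      have "x \<notin> C"
      proof
        assume "x \<in> C"
        hence "t \<le> k x z" unfolding z cl_def by auto
        hence "cl S k t x = cl S k t z" by (rule cl_eq[OF xS(1) zS])
        thus False using CC0 z C0_def by simp
      qed
      moreover have "y \<notin> C"
      proof
        assume "y \<in> C"
        hence "t \<le> k y z" unfolding z cl_def by auto
        hence "cl S k t y = cl S k t z" by (rule cl_eq[OF xS(2) zS])
        moreover have "cl S k t y = cl S k t x" using cl_eq[OF xS(2) xS(1)] ksym[OF xS(1,2)] True by simp
        ultimately show False using CC0 z C0_def by simp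
      qed
      ultimately show ?thesis by blast
    qed
    have eqo: "(\<Sum>C\<in>cls S k t A - {C0}. real (min (card (X\<inter>C)) (card (Y\<inter>C))))
       = (\<Sum>C\<in>cls S k t A - {C0}. real (min (card ((X-{x})\<inter>C)) (card ((Y-{y})\<inter>C))))"
    proof (rule sum.cong[OF refl])
      fix C assume "C \<in> cls S k t A - {C0}"
      hence "x \<notin> C" "y \<notin> C" using other by auto
      hence "(X-{x})\<inter>C = X\<inter>C" "(Y-{y})\<inter>C = Y\<inter>C" by auto
      thus "real (min (card (X\<inter>C)) (card (Y\<inter>C))) = real (min (card ((X-{x})\<inter>C)) (card ((Y-{y})\<inter>C)))"
        by simp
    qed
    have c1: "card (X\<inter>C0) = Suc (card ((X-{x})\<inter>C0))"
    proof -
      have "X\<inter>C0 = insert x ((X-{x})\<inter>C0)" using x xC0 by auto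
      thus ?thesis using fX by simp
    qed
    have c2: "card (Y\<inter>C0) = Suc (card ((Y-{y})\<inter>C0))"
    proof -
      have "Y\<inter>C0 = insert y ((Y-{y})\<inter>C0)" using y xC0 by auto
      thus ?thesis using fX by simp
    qed
    have "HH S k t A X Y = real (min (card (X\<inter>C0)) (card (Y\<inter>C0)))
          + (\<Sum>C\<in>cls S k t A - {C0}. real (min (card (X\<inter>C)) (card (Y\<inter>C))))"
      unfolding HH_def using fcls C0in by (rule sum.remove)
    also have "\<dots> = 1 + (real (min (card ((X-{x})\<inter>C0)) (card ((Y-{y})\<inter>C0)))
          + (\<Sum>C\<in>cls S k t A - {C0}. real (min (card ((X-{x})\<inter>C)) (card ((Y-{y})\<inter>C)))))"
      unfolding eqo c1 c2 by simp
    also have "\<dots> = 1 + HH S k t A (X-{x}) (Y-{y})"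
      unfolding HH_def using fcls C0in by (subst sum.remove[of _ C0]) auto
    finally show ?thesis using True by simp
  next
    case False
    have zero: "min (card (X'\<inter>C)) (card (Y'\<inter>C)) = 0"
      if Cc: "C \<in> cls S k t A" and "X' \<subseteq> X" "Y' \<subseteq> Y" for C X' Y'
    proof -
      obtain z where z: "z \<in> A" "C = cl S k t z" using Cc unfolding cls_def by blast
      have zS: "z \<in> S" using z AS by auto
      have "X'\<inter>C = {} \<or> Y'\<inter>C = {}"
      proof (rule ccontr)
        assume "\<not> ?thesis"
        then obtain x' y' where xy': "x' \<in> X'" "x' \<in> C" "y' \<in> Y'" "y' \<in> C" by blast
        have S': "x' \<in> S" "y' \<in> S" "x' \<in> X" "y' \<in> Y" using xy' that XA YA AS by auto
        have "t \<le> k x' z" "t \<le> k y' z" using xy' unfolding z cl_def by auto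
        hence "t \<le> k x' y'" using ktr[of x' y' z t] ksym[of z y'] S' zS by simp
        moreover have "k x' y' \<le> k x y" using mx S' by blast
        ultimately show False using False by simp
      qed
      thus ?thesis by auto
    qed
    have "HH S k t A X Y = 0" unfolding HH_def using zero[of _ X Y] by simp
    moreover have "HH S k t A (X-{x}) (Y-{y}) = 0" unfolding HH_def using zero[of _ "X-{x}" "Y-{y}"] by simp
    ultimately show ?thesis using False by simp
  qed
qed

lemma greedy:
  assumes fA: "finite A" and AS: "A \<subseteq> S"
  shows "X \<subseteq> A \<Longrightarrow> Y \<subseteq> A \<Longrightarrow> card X = card Y \<Longrightarrow>
    \<exists>B\<in>bijections X Y. \<forall>t>0. real (card {p\<in>B. t \<le> case_prod k p}) = HH S k t A X Y"
proof (induction "card X" arbitrary: X Y)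
  case 0
  have "X = {}" "Y = {}" using 0 fA finite_subset by (metis card_0_eq)+
  moreover have "{} \<in> bijections {} ({}::'a set)" unfolding bijections_def by auto
  moreover have "HH S k t A {} {} = 0" for t unfolding HH_def by simp
  ultimately show ?case by (intro bexI[of _ "{}"]) auto
next
  case (Suc n)
  have fX: "finite X" "finite Y" using fA Suc.prems finite_subset by auto
  have ne: "X \<noteq> {}" "Y \<noteq> {}" using Suc.hyps(2) Suc.prems(3) by auto
  define m where "m = Max (case_prod k ` (X \<times> Y))"
  have "m \<in> case_prod k ` (X \<times> Y)" unfolding m_def using fX ne by (intro Max_in) auto
  then obtain x y where xy: "x \<in> X" "y \<in> Y" "m = k x y" by auto
  have mx: "\<forall>x'\<in>X. \<forall>y'\<in>Y. k x' y' \<le> k x y"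
  proof (intro ballI)
    fix x' y' assume "x' \<in> X" "y' \<in> Y"
    hence "case_prod k (x',y') \<le> m" unfolding m_def using fX by (intro Max_ge) auto
    thus "k x' y' \<le> k x y" using xy(3) by simp
  qed
  have "n = card (X-{x})" "X-{x} \<subseteq> A" "Y-{y} \<subseteq> A" "card (X-{x}) = card (Y-{y})"
    using Suc xy fX by auto
  then obtain B' where B': "B' \<in> bijections (X-{x}) (Y-{y})"
    and Bc: "\<forall>t>0. real (card {p\<in>B'. t \<le> case_prod k p}) = HH S k t A (X-{x}) (Y-{y})"
    using Suc.hyps(1) by blast
  define B where "B = insert (x,y) B'"
  have B'sub: "B' \<subseteq> (X-{x}) \<times> (Y-{y})" using B' unfolding bijections_def by auto
  have nin: "(x,y) \<notin> B'" using B'sub by auto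
  have fB': "finite B'" using B'sub fX finite_subset by blast
  have "B \<in> bijections X Y"
  proof -
    have "B \<subseteq> X \<times> Y" using B'sub xy unfolding B_def by auto
    moreover have "\<forall>x'\<in>X. \<exists>!y'. (x', y') \<in> B"
    proof
      fix x' assume x': "x' \<in> X"
      show "\<exists>!y'. (x', y') \<in> B"
      proof (cases "x' = x")
        case True thus ?thesis using B'sub unfolding B_def by auto
      next
        case False
        hence "\<exists>!y'. (x', y') \<in> B'" using B' x' unfolding bijections_def by auto
        thus ?thesis using False unfolding B_def by auto
      qed
    qed
    moreover have "\<forall>y'\<in>Y. \<exists>!x'. (x', y') \<in> B"
    proof
      fix y' assume y': "y' \<in> Y"
      show "\<exists>!x'. (x', y') \<in> B"
      proof (cases "y' = y")
        case True thus ?thesis using B'sub unfolding B_def by auto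
      next
        case False
        hence "\<exists>!x'. (x', y') \<in> B'" using B' y' unfolding bijections_def by auto
        thus ?thesis using False unfolding B_def by auto
      qed
    qed
    ultimately show ?thesis unfolding bijections_def by blast
  qed
  moreover have "\<forall>t>0. real (card {p\<in>B. t \<le> case_prod k p}) = HH S k t A X Y"
  proof (intro allI impI)
    fix t :: real assume t: "0 < t"
    have "real (card {p\<in>B. t \<le> case_prod k p}) =
          (if t \<le> k x y then 1 else 0) + real (card {p\<in>B'. t \<le> case_prod k p})"
    proof (cases "t \<le> k x y")
      case True
      hence "{p\<in>B. t \<le> case_prod k p} = insert (x,y) {p\<in>B'. t \<le> case_prod k p}"
        unfolding B_def by auto
      thus ?thesis using True nin fB' by simp
    next
      case False
      hence "{p\<in>B. t \<le> case_prod k p} = {p\<in>B'. t \<le> case_prod k p}"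
        unfolding B_def by auto
      thus ?thesis using False by simp
    qed
    also have "\<dots> = HH S k t A X Y"
      using Bc t HH_step[OF fA AS Suc.prems(1,2) xy(1,2) mx t] by simp
    finally show "real (card {p\<in>B. t \<le> case_prod k p}) = HH S k t A X Y" .
  qed
  ultimately show ?case by blast
qed


lemma sumB:
  assumes fA: "finite A" and AS: "A \<subseteq> S" and XA: "X \<subseteq> A" and YA: "Y \<subseteq> A"
    and B: "B \<in> bijections X Y"
  shows "(\<Sum>(x, y)\<in>B. k x y) = (\<Sum>v\<in>vals k A. dv k A v * real (card {p\<in>B. v \<le> case_prod k p}))"
proof -
  have BXY: "B \<subseteq> A \<times> A" using B XA YA unfolding bijections_def by auto
  have fB: "finite B" using BXY fA finite_subset by blast
  have fV: "finite (vals k A)" using finite_vals[OF fA] .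
  have pt: "case_prod k p = (\<Sum>v\<in>vals k A. if v \<le> case_prod k p then dv k A v else 0)" if p: "p \<in> B" for p
  proof -
    obtain x y where xy: "p = (x,y)" by force
    have "x \<in> A" "y \<in> A" using p xy BXY by auto
    hence "k x y \<in> insert 0 (vals k A)" using knn[of x y] AS unfolding vals_def by force
    hence "k x y = (\<Sum>v\<in>{v\<in>vals k A. v \<le> k x y}. dv k A v)" by (rule decomp[OF fA])
    also have "\<dots> = (\<Sum>v\<in>vals k A. if v \<le> k x y then dv k A v else 0)"
      using fV by (rule sum.inter_filter)
    finally show ?thesis using xy by simp
  qed
  have "(\<Sum>p\<in>B. case_prod k p) = (\<Sum>p\<in>B. \<Sum>v\<in>vals k A. if v \<le> case_prod k p then dv k A v else 0)"
    using pt by (rule sum.cong[OF refl])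
  also have "\<dots> = (\<Sum>v\<in>vals k A. \<Sum>p\<in>B. if v \<le> case_prod k p then dv k A v else 0)"
    by (rule sum.swap)
  also have "\<dots> = (\<Sum>v\<in>vals k A. dv k A v * real (card {p\<in>B. v \<le> case_prod k p}))"
  proof (rule sum.cong[OF refl])
    fix v
    have "(\<Sum>p\<in>B. if v \<le> case_prod k p then dv k A v else 0) = (\<Sum>p\<in>{p\<in>B. v \<le> case_prod k p}. dv k A v)"
      using fB by (rule sum.inter_filter[symmetric])
    thus "(\<Sum>p\<in>B. if v \<le> case_prod k p then dv k A v else 0) = dv k A v * real (card {p\<in>B. v \<le> case_prod k p})"
      by simp
  qed
  finally have "(\<Sum>p\<in>B. case_prod k p) = (\<Sum>v\<in>vals k A. dv k A v * real (card {p\<in>B. v \<le> case_prod k p}))" .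
  thus ?thesis by (simp add: case_prod_beta')
qed

lemma oa_eq:
  assumes fA: "finite A" and AS: "A \<subseteq> S" and XA: "X \<subseteq> A" and YA: "Y \<subseteq> A"
    and c: "card X = card Y"
  shows "oa_kernel k X Y = GG S k A X Y"
proof -
  have fX: "finite X" "finite Y" using fA XA YA finite_subset by auto
  have fbij: "finite (bijections X Y)"
  proof -
    have "bijections X Y \<subseteq> Pow (X \<times> Y)" unfolding bijections_def by auto
    thus ?thesis using fX finite_subset by blast
  qed
  obtain B0 where B0: "B0 \<in> bijections X Y"
    and B0c: "\<forall>t>0. real (card {p\<in>B0. t \<le> case_prod k p}) = HH S k t A X Y"
    using greedy[OF fA AS XA YA c] by blast
  have pos: "\<And>v. v \<in> vals k A \<Longrightarrow> 0 < v" unfolding vals_def by auto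
  show ?thesis unfolding oa_kernel_def
  proof (rule Max_eqI)
    show "finite ((\<lambda>B. \<Sum>(x, y)\<in>B. k x y) ` bijections X Y)" using fbij by simp
  next
    fix s assume "s \<in> (\<lambda>B. \<Sum>(x, y)\<in>B. k x y) ` bijections X Y"
    then obtain B where B: "B \<in> bijections X Y" "s = (\<Sum>(x, y)\<in>B. k x y)" by auto
    have "s = (\<Sum>v\<in>vals k A. dv k A v * real (card {p\<in>B. v \<le> case_prod k p}))"
      unfolding B(2) by (rule sumB[OF fA AS XA YA B(1)])
    also have "\<dots> \<le> GG S k A X Y" unfolding GG_def
    proof (rule sum_mono)
      fix v assume v: "v \<in> vals k A"
      show "dv k A v * real (card {p\<in>B. v \<le> case_prod k p}) \<le> dv k A v * HH S k v A X Y"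
        using upper[OF fA AS XA YA B(1) pos[OF v]] dv_nonneg[OF fA v] by (rule mult_left_mono)
    qed
    finally show "s \<le> GG S k A X Y" .
  next
    have "(\<Sum>(x, y)\<in>B0. k x y) = GG S k A X Y"
      unfolding sumB[OF fA AS XA YA B0] GG_def using B0c pos by simp
    thus "GG S k A X Y \<in> (\<lambda>B. \<Sum>(x, y)\<in>B. k x y) ` bijections X Y" using B0 by force
  qed
qed

end

lemma GG_sym: "GG S k A X Y = GG S k A Y X"
  unfolding GG_def HH_def by (simp add: min.commute)

lemma min_ind: "a \<le> n \<Longrightarrow> b \<le> n \<Longrightarrow>
  real (min a b) = (\<Sum>q<n. (if q < a then 1 else 0) * (if q < b then (1::real) else 0))"
proof -
  assume "a \<le> n" "b \<le> n"
  have "(\<Sum>q<n. (if q < a then 1 else 0) * (if q < b then (1::real) else 0)) = (\<Sum>q\<in>{..<n}. if q < min a b then 1 else 0)"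
    by (rule sum.cong) auto
  also have "\<dots> = real (card {q\<in>{..<n}. q < min a b})"
    by (simp add: sum.inter_filter[symmetric])
  also have "{q\<in>{..<n}. q < min a b} = {..<min a b}" using \<open>a \<le> n\<close> by auto
  finally show ?thesis by simp
qed

lemma psd_cong: "(\<And>i j. i < m \<Longrightarrow> j < m \<Longrightarrow> M i j = M' i j) \<Longrightarrow> psd_matrix m M \<longleftrightarrow> psd_matrix m M'"
proof -
  assume h: "\<And>i j. i < m \<Longrightarrow> j < m \<Longrightarrow> M i j = M' i j"
  have "\<And>c. (\<Sum>i<m. \<Sum>j<m. c i * M i j * c j) = (\<Sum>i<m. \<Sum>j<m. c i * M' i j * c j)"
    by (intro sum.cong refl) (simp add: h)
  thus ?thesis unfolding psd_matrix_def by simp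
qed

lemma psd_sum: "(\<And>f. f \<in> F \<Longrightarrow> psd_matrix m (M f)) \<Longrightarrow> psd_matrix m (\<lambda>i j. \<Sum>f\<in>F. M f i j)"
proof -
  assume a: "\<And>f. f \<in> F \<Longrightarrow> psd_matrix m (M f)"
  show ?thesis unfolding psd_matrix_def
  proof
    fix c :: "nat \<Rightarrow> real"
    have "(\<Sum>i<m. \<Sum>j<m. c i * (\<Sum>f\<in>F. M f i j) * c j) = (\<Sum>i<m. \<Sum>j<m. \<Sum>f\<in>F. c i * M f i j * c j)"
      by (simp add: sum_distrib_left sum_distrib_right)
    also have "\<dots> = (\<Sum>i<m. \<Sum>f\<in>F. \<Sum>j<m. c i * M f i j * c j)"
      by (rule sum.cong[OF refl], rule sum.swap)
    also have "\<dots> = (\<Sum>f\<in>F. \<Sum>i<m. \<Sum>j<m. c i * M f i j * c j)"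
      by (rule sum.swap)
    also have "\<dots> \<ge> 0" using a unfolding psd_matrix_def by (intro sum_nonneg[of F]) auto
    finally show "0 \<le> (\<Sum>i<m. \<Sum>j<m. c i * (\<Sum>f\<in>F. M f i j) * c j)" .
  qed
qed

lemma psd_scale: "0 \<le> w \<Longrightarrow> psd_matrix m M \<Longrightarrow> psd_matrix m (\<lambda>i j. w * M i j)"
proof -
  assume a: "0 \<le> w" "psd_matrix m M"
  show ?thesis unfolding psd_matrix_def
  proof
    fix c :: "nat \<Rightarrow> real"
    have "(\<Sum>i<m. \<Sum>j<m. c i * (w * M i j) * c j) = w * (\<Sum>i<m. \<Sum>j<m. c i * M i j * c j)"
      by (simp add: sum_distrib_left mult_ac)
    also have "\<dots> \<ge> 0" using a unfolding psd_matrix_def by simp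
    finally show "0 \<le> (\<Sum>i<m. \<Sum>j<m. c i * (w * M i j) * c j)" .
  qed
qed

lemma psd_rank1: "psd_matrix m (\<lambda>i j. g i * g j)"
  unfolding psd_matrix_def
proof
  fix c :: "nat \<Rightarrow> real"
  have "(\<Sum>i<m. \<Sum>j<m. c i * (g i * g j) * c j) = (\<Sum>i<m. c i * g i) * (\<Sum>j<m. c j * g j)"
    by (simp add: sum_product mult_ac)
  also have "\<dots> \<ge> 0" by simp
  finally show "0 \<le> (\<Sum>i<m. \<Sum>j<m. c i * (g i * g j) * c j)" .
qed

theorem corollary1:
  fixes S :: "'a set" and k :: "'a \<Rightarrow> 'a \<Rightarrow> real" and n :: nat
  assumes "strong_kernel S k"
  shows "(\<forall>X\<in>nsubsets S n. \<forall>Y\<in>nsubsets S n. oa_kernel k X Y = oa_kernel k Y X) \<and>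
         (\<forall>(m::nat) (Xs :: nat \<Rightarrow> 'a set). (\<forall>i<m. Xs i \<in> nsubsets S n) \<longrightarrow>
            psd_matrix m (\<lambda>i j. oa_kernel k (Xs i) (Xs j)))"
proof (intro conjI ballI allI impI)
  fix X Y assume X: "X \<in> nsubsets S n" and Y: "Y \<in> nsubsets S n"
  let ?A = "X \<union> Y"
  have h: "finite ?A" "?A \<subseteq> S" "X \<subseteq> ?A" "Y \<subseteq> ?A" "card X = card Y"
    using X Y unfolding nsubsets_def by auto
  show "oa_kernel k X Y = oa_kernel k Y X"
    using oa_eq[OF assms h] oa_eq[OF assms h(1,2,4,3) h(5)[symmetric]] GG_sym by metis
next
  fix m and Xs :: "nat \<Rightarrow> 'a set"
  assume Xs: "\<forall>i<m. Xs i \<in> nsubsets S n"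
  define A where "A = (\<Union>i<m. Xs i)"
  have fA: "finite A" and AS: "A \<subseteq> S" using Xs unfolding A_def nsubsets_def by auto
  have XA: "\<And>i. i < m \<Longrightarrow> Xs i \<subseteq> A" unfolding A_def by auto
  have cX: "\<And>i. i < m \<Longrightarrow> card (Xs i) = n" "\<And>i. i < m \<Longrightarrow> finite (Xs i)"
    using Xs unfolding nsubsets_def by auto
  define \<phi> where "\<phi> C q i = (if q < card (Xs i \<inter> C) then 1 else (0::real))" for C q i
  have eq: "oa_kernel k (Xs i) (Xs j) =
     (\<Sum>v\<in>vals k A. dv k A v * (\<Sum>C\<in>cls S k v A. \<Sum>q<n. \<phi> C q i * \<phi> C q j))"
    if ij: "i < m" "j < m" for i j
  proof -
    have "oa_kernel k (Xs i) (Xs j) = GG S k A (Xs i) (Xs j)"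
      using oa_eq[OF assms fA AS XA[OF ij(1)] XA[OF ij(2)]] cX ij by simp
    also have "\<dots> = (\<Sum>v\<in>vals k A. dv k A v * (\<Sum>C\<in>cls S k v A. \<Sum>q<n. \<phi> C q i * \<phi> C q j))"
      unfolding GG_def HH_def
    proof (intro sum.cong refl arg_cong2[where f = "(*)"])
      fix v C
      have "card (Xs i \<inter> C) \<le> n" "card (Xs j \<inter> C) \<le> n"
        using cX ij card_mono[OF cX(2)[OF ij(1)], of "Xs i \<inter> C"] card_mono[OF cX(2)[OF ij(2)], of "Xs j \<inter> C"]
        by auto
      thus "real (min (card (Xs i \<inter> C)) (card (Xs j \<inter> C))) = (\<Sum>q<n. \<phi> C q i * \<phi> C q j)"
        unfolding \<phi>_def by (rule min_ind)
    qed
    finally show ?thesis .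
  qed
  have "psd_matrix m (\<lambda>i j. \<Sum>v\<in>vals k A. dv k A v * (\<Sum>C\<in>cls S k v A. \<Sum>q<n. \<phi> C q i * \<phi> C q j))"
    by (intro psd_sum psd_scale dv_nonneg[OF fA] psd_rank1) auto
  thus "psd_matrix m (\<lambda>i j. oa_kernel k (Xs i) (Xs j))"
    by (subst psd_cong[OF eq]) auto
qed

end
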